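(* Let $0<\alpha\le 5\pi/6$ and let $u,v\in V$ with $\{u,v\}\in E$ (i.e. $d(u,v)\le R$). Then either $\{u,v\}\in E_\alpha$, or there exist $u',v'\in V$ such that (a) $d(u',v')<d(u,v)$, (b) $u'=u$ or $\{u,u'\}\in E_\alpha$, and (c) $v'=v$ or $\{v,v'\}\in E_\alpha$.
   Context: Let $V$ be a finite set of pairwise distinct points (nodes) in the Euclidean plane, $d$ the Euclidean distance, and $R>0$. Let $G_R=(V,E)$ be the undirected graph with $E=\{\{u,v\}: u\neq v,\ d(u,v)\le R\}$. Fix a finite increasing sequence of radius levels $0<r_1<r_2<\dots<r_k=R$. For $u\in V$ and $1\le i\le k$ let $S_i(u)=\{v\in V\setminus\{u\}: d(u,v)\le r_i\}$. For $0<\alpha<2\pi$, a closed cone of width $\alpha$ with apex $u$ is a set $\{u+t(\cos\varphi,\sin\varphi): t\ge 0,\ \varphi\in[\theta-\alpha/2,\theta+\alpha/2]\}$ for some $\theta$. A finite set $S\subseteq V\setminus\{u\}$ has an $\alpha$-gap (at $u$) if some closed cone of width $\alpha$ with apex $u$ contains no node of $S$ (in particular $\emptyset$ has an $\alpha$-gap). The algorithm CBTC($\alpha$) assigns to each $u$ the index $i_u$ = the least $i\in\{1,\dots,k\}$ such that $S_i(u)$ has no $\alpha$-gap, or $i_u=k$ if there is no such $i$; set $N_\alpha(u)=S_{i_u}(u)$ and $N_\alpha=\{(u,v): v\in N_\alpha(u)\}$. Let $E_\alpha=\{\{u,v\}: (u,v)\in N_\alpha \text{ or } (v,u)\in N_\alpha\}$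 (the symmetric closure of $N_\alpha$) and $G_\alpha=(V,E_\alpha)$. *)

theory Defs
  imports "HOL-Analysis.Analysis"
begin

text \<open>Points of the Euclidean plane are modelled as complex numbers; dist is the Euclidean distance.
  Radius levels are r 1 < ... < r k = R, given as a function r :: nat \<Rightarrow> real on {1..k}.\<close>

definition S_lvl :: "complex set \<Rightarrow> (nat \<Rightarrow> real) \<Rightarrow> nat \<Rightarrow> complex \<Rightarrow> complex set" where
  "S_lvl V r i u = {v \<in> V - {u}. dist u v \<le> r i}"

definition cone :: "complex \<Rightarrow> real \<Rightarrow> real \<Rightarrow> complex set" where
  "cone u \<alpha> \<theta> = {u + of_real t * cis \<phi> | t \<phi>. t \<ge> 0 \<and> \<theta> - \<alpha>/2 \<le> \<phi> \<and> \<phi> \<le> \<theta> + \<alpha>/2}"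

definition has_gap :: "complex \<Rightarrow> real \<Rightarrow> complex set \<Rightarrow> bool" where
  "has_gap u \<alpha> S \<longleftrightarrow> (\<exists>\<theta>. S \<inter> cone u \<alpha> \<theta> = {})"

definition cbtc_index :: "complex set \<Rightarrow> (nat \<Rightarrow> real) \<Rightarrow> nat \<Rightarrow> real \<Rightarrow> complex \<Rightarrow> nat" where
  "cbtc_index V r k \<alpha> u =
     (if \<exists>i\<in>{1..k}. \<not> has_gap u \<alpha> (S_lvl V r i u)
      then (LEAST i. i \<in> {1..k} \<and> \<not> has_gap u \<alpha> (S_lvl V r i u))
      else k)"

definition N_alpha :: "complex set \<Rightarrow> (nat \<Rightarrow> real) \<Rightarrow> nat \<Rightarrow> real \<Rightarrow> complex \<Rightarrow> complex set" where
  "N_alpha V r k \<alpha> u = S_lvl V r (cbtc_index V r k \<alpha> u) u"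

definition E_alpha :: "complex set \<Rightarrow> (nat \<Rightarrow> real) \<Rightarrow> nat \<Rightarrow> real \<Rightarrow> complex \<Rightarrow> complex \<Rightarrow> bool" where
  "E_alpha V r k \<alpha> u v \<longleftrightarrow> v \<in> N_alpha V r k \<alpha> u \<or> u \<in> N_alpha V r k \<alpha> v"

end

theory Submission
  imports Defs
begin

lemma affine_neg:
  fixes mm kk lo hi x :: real
  assumes "lo \<le> x" "x \<le> hi" "mm*lo + kk < 0" "mm*hi + kk < 0"
  shows "mm*x + kk < 0"
proof (cases "mm \<ge> 0")
  case True
  then have "mm*x \<le> mm*hi" using assms by (simp add: mult_left_mono)
  then show ?thesis using assms by linarith
next
  case False
  then have "mm*x \<le> mm*lo" using assms by (simp add: mult_left_mono_neg)
  then show ?thesis using assms by linarith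
qed

lemma cos_lt_half:
  fixes x :: real
  assumes "pi < x" "x < 4*pi/3"
  shows "cos x < - 1/2"
proof -
  have "cos (pi/3) < cos (x - pi)"
    by (rule cos_monotone_0_pi) (use assms in auto)
  then show ?thesis using cos_60 by simp
qed

lemma vertex3:
  fixes \<phi> \<psi> :: real
  assumes "pi/3 < \<phi>" "pi/3 < \<psi>" "\<phi> + \<psi> \<le> 5*pi/6"
  shows "1 + 4 * cos \<psi> * (cos \<phi> * cos \<psi> - sin \<phi> * sin \<psi>) - 2 * cos \<phi> < 0"
proof -
  have e: "cos (\<phi> + 2*\<psi>) = cos \<phi> * (cos \<psi>)^2 - 2 * sin \<phi> * sin \<psi> * cos \<psi> - cos \<phi> * (sin \<psi>)^2"
    by (simp only: mult_2 cos_add sin_add) (simp add: power2_eq_square algebra_simps)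
  have s: "(sin \<psi>)^2 = 1 - (cos \<psi>)^2" using sin_cos_squared_add[of \<psi>] by linarith
  have "cos (\<phi> + 2*\<psi>) < -1/2" by (rule cos_lt_half) (use assms in auto)
  moreover have "1 + 4 * cos \<psi> * (cos \<phi> * cos \<psi> - sin \<phi> * sin \<psi>) - 2 * cos \<phi> = 1 + 2 * cos (\<phi> + 2*\<psi>)"
    using e s by algebra
  ultimately show ?thesis by linarith
qed

lemma pair_real:
  fixes a b c \<phi> \<psi> :: real
  assumes c: "0 < c" and a: "0 < a" "a < c" and b: "0 < b" "b < c"
    and ph: "0 < \<phi>" "\<phi> < pi" and ps: "0 < \<psi>" "\<psi> < pi" and sum: "\<phi> + \<psi> \<le> 5*pi/6"
    and ba: "a^2 - 2*a*c*cos \<phi> \<ge> 0" and bb: "b^2 - 2*b*c*cos \<psi> \<ge> 0"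
  shows "(a * cos \<phi> + b * cos \<psi> - c)^2 + (a * sin \<phi> - b * sin \<psi>)^2 < c^2"
proof -
  define cp where "cp = cos \<phi>"
  define yp where "yp = sin \<phi>"
  define cq where "cq = cos \<psi>"
  define yq where "yq = sin \<psi>"
  have a0: "2*c*cp \<le> a"
  proof -
    have "a * (a - 2*c*cp) \<ge> 0" using ba by (simp add: cp_def power2_eq_square algebra_simps)
    then have "a - 2*c*cp \<ge> 0" using a by (simp add: zero_le_mult_iff)
    then show ?thesis by simp
  qed
  have b0: "2*c*cq \<le> b"
  proof -
    have "b * (b - 2*c*cq) \<ge> 0" using bb by (simp add: cq_def power2_eq_square algebra_simps)
    then have "b - 2*c*cq \<ge> 0" using b by (simp add: zero_le_mult_iff)
    then show ?thesis by simp
  qed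
  have cph: "cp < 1/2"
  proof -
    have "c*(2*cp) < c*1" using a0 a by linarith
    then have "2*cp < 1" using c mult_less_cancel_left_pos by blast
    then show ?thesis by simp
  qed
  have cqh: "cq < 1/2"
  proof -
    have "c*(2*cq) < c*1" using b0 b by linarith
    then have "2*cq < 1" using c mult_less_cancel_left_pos by blast
    then show ?thesis by simp
  qed
  have php: "pi/3 < \<phi>"
  proof (rule ccontr)
    assume "\<not> pi/3 < \<phi>"
    then have "cos (pi/3) \<le> cos \<phi>" using ph by (intro cos_monotone_0_pi_le) auto
    then show False using cph cos_60 cp_def by simp
  qed
  have psp: "pi/3 < \<psi>"
  proof (rule ccontr)
    assume "\<not> pi/3 < \<psi>"
    then have "cos (pi/3) \<le> cos \<psi>" using ps by (intro cos_monotone_0_pi_le) auto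
    then show False using cqh cos_60 cq_def by simp
  qed
  have ph2: "\<phi> < pi/2" and ps2: "\<psi> < pi/2" using php psp sum by auto
  have cp0: "cp > 0" unfolding cp_def by (rule cos_gt_zero_pi) (use ph ph2 in auto)
  have cq0: "cq > 0" unfolding cq_def by (rule cos_gt_zero_pi) (use ps ps2 in auto)
  have sp0: "yp > 0" unfolding yp_def by (rule sin_gt_zero) (use ph in auto)
  have sq0: "yq > 0" unfolding yq_def by (rule sin_gt_zero) (use ps in auto)
  have pyp: "yp^2 + cp^2 = 1" and pyq: "yq^2 + cq^2 = 1" unfolding cp_def yp_def cq_def yq_def by simp_all
  define C where "C = cp*cq - yp*yq"
  have C0: "C < 0"
  proof -
    have "cos (\<phi> + \<psi>) < cos (pi/2)" by (rule cos_monotone_0_pi) (use php psp sum in auto)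
    then show ?thesis by (simp add: C_def cp_def cq_def yp_def yq_def cos_add)
  qed
  have V1: "(1 - cp)*(1 - cq) < yp*yq"
  proof -
    have l: "1 - cp < yp" if "yp^2 + cp^2 = 1" "cp > 0" "yp > 0" "cp < 1/2" for cp yp :: real
    proof -
      have "0 \<le> cp^2" by simp
      then have "yp^2 \<le> 1" using that by linarith
      then have "yp^2 \<le> 1^2" by simp
      then have "yp \<le> 1" by (rule power2_le_imp_le) simp
      have "(1-cp)*(1+cp) = yp^2" using that by (simp add: algebra_simps power2_eq_square)
      also have "... \<le> yp * 1" using \<open>yp \<le> 1\<close> that by (simp add: power2_eq_square)
      also have "... < yp * (1+cp)" using that by simp
      finally show ?thesis using that by (simp add: mult_less_cancel_right_pos)
    qed
    have "1 - cp < yp" by (rule l) (use pyp cp0 sp0 cph in auto)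
    moreover have "1 - cq < yq" by (rule l) (use pyq cq0 sq0 cqh in auto)
    ultimately show ?thesis using cph cqh by (intro mult_strict_mono) auto
  qed
  have V3: "1 + 4*cq*C - 2*cp < 0" using vertex3[OF php psp sum] by (simp add: C_def cp_def cq_def yp_def yq_def)
  have V4: "1 + 4*cp*C - 2*cq < 0" using vertex3[OF psp php] sum by (simp add: C_def cp_def cq_def yp_def yq_def algebra_simps)
  have V2: "cp*cq*C < 0" using cp0 cq0 C0 by (simp add: mult_pos_neg)
  define a0 where "a0 = 2*c*cp"
  define b0 where "b0 = 2*c*cq"
  define g where "g = 2*a*b*C + c*(a - a0) + c*(b - b0)"
  have E: "(a * cos \<phi> + b * cos \<psi> - c)^2 + (a * sin \<phi> - b * sin \<psi>)^2 - c^2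
      = g + (a - a0)*(a - c) + (b - b0)*(b - c)"
  proof -
    have "(a * cp + b * cq - c)^2 + (a * yp - b * yq)^2 - c^2
        = a^2*(yp^2+cp^2) + b^2*(yq^2+cq^2) + 2*a*b*C - 2*a*c*cp - 2*b*c*cq"
      unfolding C_def by algebra
    also have "... = g + (a - a0)*(a - c) + (b - b0)*(b - c)"
      unfolding pyp pyq g_def a0_def b0_def by algebra
    finally show ?thesis by (simp add: cp_def cq_def yp_def yq_def)
  qed
  have g0: "g < 0"
  proof -
    have ga0: "(2*a0*C + c)*b + (- c*b0) < 0"
    proof (rule affine_neg[of b0 b c])
      show "b0 \<le> b" "b \<le> c" using b0 b a0_def b0_def by auto
      have "(2*a0*C + c)*b0 + (- c*b0) = 8*c^2*(cp*cq*C)" by (simp add: a0_def b0_def power2_eq_square algebra_simps)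
      then show "(2*a0*C + c)*b0 + (- c*b0) < 0" using V2 c by (simp add: mult_pos_neg)
      have "(2*a0*C + c)*c + (- c*b0) = c^2*(1 + 4*cp*C - 2*cq)" by (simp add: a0_def b0_def power2_eq_square algebra_simps)
      then show "(2*a0*C + c)*c + (- c*b0) < 0" using V4 c by (simp add: mult_pos_neg)
    qed
    have gc: "(2*c*C + c)*b + (c*(c - a0) - c*b0) < 0"
    proof (rule affine_neg[of b0 b c])
      show "b0 \<le> b" "b \<le> c" using b0 b a0_def b0_def by auto
      have "(2*c*C + c)*b0 + (c*(c - a0) - c*b0) = c^2*(1 + 4*cq*C - 2*cp)" by (simp add: a0_def b0_def power2_eq_square algebra_simps)
      then show "(2*c*C + c)*b0 + (c*(c - a0) - c*b0) < 0" using V3 c by (simp add: mult_pos_neg)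
      have "(2*c*C + c)*c + (c*(c - a0) - c*b0) = 2*c^2*(C + (1 - cp) - cq)" by (simp add: a0_def b0_def power2_eq_square algebra_simps)
      moreover have "C + (1 - cp) - cq < 0" using V1 by (simp add: C_def algebra_simps)
      ultimately show "(2*c*C + c)*c + (c*(c - a0) - c*b0) < 0" using c by (simp add: mult_pos_neg)
    qed
    have "(2*b*C + c)*a + (c*(b - b0) - c*a0) < 0"
    proof (rule affine_neg[of a0 a c])
      show "a0 \<le> a" "a \<le> c" using a0 a a0_def by auto
      show "(2*b*C + c)*a0 + (c*(b - b0) - c*a0) < 0" using ga0 by (simp add: algebra_simps)
      show "(2*b*C + c)*c + (c*(b - b0) - c*a0) < 0" using gc by (simp add: algebra_simps)
    qed
    then show ?thesis by (simp add: g_def algebra_simps)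
  qed
  have "(a - a0)*(a - c) \<le> 0" using a0 a a0_def by (simp add: mult_nonneg_nonpos)
  moreover have "(b - b0)*(b - c) \<le> 0" using b0 b b0_def by (simp add: mult_nonneg_nonpos)
  ultimately show ?thesis using E g0 by linarith
qed

lemma pair_cplx:
  fixes z z' :: complex and c :: real
  assumes c: "0 < c" and z: "z \<noteq> 0" "norm z < c" "norm (z - of_real c) \<ge> c"
    and z': "z' \<noteq> 0" "norm z' < c" "norm (z' - of_real c) \<ge> c"
    and im: "Im z > 0" "Im z' < 0" and ang: "Arg z - Arg z' \<le> 5*pi/6"
  shows "norm (z + z' - of_real c) < c"
proof -
  define a where "a = norm z"
  define b where "b = norm z'"
  define \<phi> where "\<phi> = Arg z"
  define \<psi> where "\<psi> = - Arg z'"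
  have zr: "z = rcis a \<phi>" unfolding a_def \<phi>_def by (simp add: rcis_cmod_Arg)
  have zr': "z' = rcis b (- \<psi>)" unfolding b_def \<psi>_def by (simp add: rcis_cmod_Arg)
  have Rz: "Re z = a * cos \<phi>" "Im z = a * sin \<phi>" by (subst zr, simp)+
  have Rz': "Re z' = b * cos \<psi>" "Im z' = - (b * sin \<psi>)" by (subst zr', simp)+
  have ph: "0 < \<phi>" "\<phi> < pi" using Arg_lt_pi[of z] im unfolding \<phi>_def by auto
  have ps: "0 < \<psi>" "\<psi> < pi" using Arg_neg_iff[of z'] mpi_less_Arg[of z'] im unfolding \<psi>_def by auto
  have a: "0 < a" "a < c" using z a_def by auto
  have b: "0 < b" "b < c" using z' b_def by auto
  have "c^2 \<le> (norm (z - of_real c))^2" using z c by (intro power_mono) auto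
  also have "... = (a * cos \<phi> - c)^2 + (a * sin \<phi>)^2" by (simp add: cmod_power2 Rz)
  finally have cz: "c^2 \<le> (a * cos \<phi> - c)^2 + (a * sin \<phi>)^2" .
  have ba: "a^2 - 2*a*c*cos \<phi> \<ge> 0"
  proof -
    have "(a * cos \<phi> - c)^2 + (a * sin \<phi>)^2 = a^2*((sin \<phi>)^2 + (cos \<phi>)^2) - 2*a*c*cos \<phi> + c^2" by algebra
    then have "(a * cos \<phi> - c)^2 + (a * sin \<phi>)^2 = a^2 - 2*a*c*cos \<phi> + c^2" by simp
    then show ?thesis using cz by linarith
  qed
  have "c^2 \<le> (norm (z' - of_real c))^2" using z' c by (intro power_mono) auto
  also have "... = (b * cos \<psi> - c)^2 + (b * sin \<psi>)^2" by (simp add: cmod_power2 Rz')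
  finally have cz': "c^2 \<le> (b * cos \<psi> - c)^2 + (b * sin \<psi>)^2" .
  have bb: "b^2 - 2*b*c*cos \<psi> \<ge> 0"
  proof -
    have "(b * cos \<psi> - c)^2 + (b * sin \<psi>)^2 = b^2*((sin \<psi>)^2 + (cos \<psi>)^2) - 2*b*c*cos \<psi> + c^2" by algebra
    then have "(b * cos \<psi> - c)^2 + (b * sin \<psi>)^2 = b^2 - 2*b*c*cos \<psi> + c^2" by simp
    then show ?thesis using cz' by linarith
  qed
  have "\<phi> + \<psi> \<le> 5*pi/6" using ang unfolding \<phi>_def \<psi>_def by simp
  from pair_real[OF c a b ph ps this ba bb]
  have "(norm (z + z' - of_real c))^2 < c^2" by (simp add: cmod_power2 Rz Rz')
  then show ?thesis using c by (metis power2_less_imp_less less_imp_le)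
qed

lemma pair_cplx2:
  fixes z z' :: complex and c :: real
  assumes c: "0 < c" and z: "z \<noteq> 0" "norm z < c" "norm (z - of_real c) \<ge> c"
    and z': "z' \<noteq> 0" "norm z' < c" "norm (z' - of_real c) \<ge> c"
    and im: "Im z < 0" "Im z' > 0" and ang: "Arg z' - Arg z \<le> 5*pi/6"
  shows "norm (z + z' - of_real c) < c"
proof -
  have nr: "z \<notin> \<real>" "z' \<notin> \<real>" using im by (auto simp: complex_is_Real_iff)
  have "norm (cnj z + cnj z' - of_real c) < c"
  proof (rule pair_cplx[OF c])
    show "cnj z \<noteq> 0" "norm (cnj z) < c" using z by auto
    show "cnj z' \<noteq> 0" "norm (cnj z') < c" using z' by auto
    have "norm (cnj z - of_real c) = norm (cnj (z - of_real c))" by simp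
    then show "norm (cnj z - of_real c) \<ge> c" using z by (simp only: complex_mod_cnj)
    have "norm (cnj z' - of_real c) = norm (cnj (z' - of_real c))" by simp
    then show "norm (cnj z' - of_real c) \<ge> c" using z' by (simp only: complex_mod_cnj)
    show "Im (cnj z) > 0" "Im (cnj z') < 0" using im by auto
    show "Arg (cnj z) - Arg (cnj z') \<le> 5*pi/6" using ang nr by (simp add: Arg_cnj)
  qed
  moreover have "norm (cnj z + cnj z' - of_real c) = norm (cnj (z + z' - of_real c))" by simp
  ultimately show ?thesis by (simp only: complex_mod_cnj)
qed

lemma cone_elim:
  assumes "x \<in> cone u \<alpha> \<theta>"
  obtains t \<phi> where "x = u + of_real t * cis \<phi>" "t \<ge> 0" "\<theta> - \<alpha>/2 \<le> \<phi>" "\<phi> \<le> \<theta> + \<alpha>/2"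
  using assms unfolding cone_def by blast

lemma cone_intro:
  assumes "x = u + of_real t * cis \<phi>" "t \<ge> 0" "\<theta> - \<alpha>/2 \<le> \<phi>" "\<phi> \<le> \<theta> + \<alpha>/2"
  shows "x \<in> cone u \<alpha> \<theta>"
  using assms unfolding cone_def by blast

lemma cone_transform:
  assumes w: "norm w = 1" and x: "x \<in> cone u \<alpha> \<theta>"
  shows "(x - u) / w \<in> cone 0 \<alpha> (\<theta> - Arg w)"
proof -
  obtain t \<phi> where e: "x = u + of_real t * cis \<phi>" "t \<ge> 0" "\<theta> - \<alpha>/2 \<le> \<phi>" "\<phi> \<le> \<theta> + \<alpha>/2"
    using cone_elim[OF x] by blast
  have w0: "w \<noteq> 0" using w by auto
  have "cis (Arg w) = w" using cis_Arg[OF w0] w by (simp add: sgn_div_norm)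
  then have "(x - u) / w = of_real t * cis (\<phi> - Arg w)"
    using e(1) by (metis add_diff_cancel_left' cis_divide times_divide_eq_right)
  then show ?thesis by (intro cone_intro[where t=t and \<phi>="\<phi> - Arg w"]) (use e in auto)
qed

lemma side:
  fixes A :: "complex set" and c \<alpha> :: real
  assumes fin: "finite A" and c: "0 < c" and al: "0 < \<alpha>" "\<alpha> < pi"
    and ng: "\<And>\<theta>. \<exists>z\<in>A. z \<in> cone 0 \<alpha> \<theta>"
    and nodes: "\<And>z. z \<in> A \<Longrightarrow> z \<noteq> 0 \<and> norm z < c \<and> norm (z - of_real c) \<ge> c"
  shows "\<exists>z1\<in>A. \<exists>z2\<in>A. Im z1 > 0 \<and> Im z2 < 0 \<and> Arg z1 - Arg z2 \<le> \<alpha>"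
proof -
  have polar: "Im z = t * sin \<rho> \<and> t > 0" if "z \<in> A" "z = 0 + of_real t * cis \<rho>" "t \<ge> 0" for z t \<rho>
  proof -
    have "t \<noteq> 0" using that nodes[of z] by auto
    then show ?thesis using that by simp
  qed
  define U where "U = {z\<in>A. Im z > 0}"
  define L where "L = {z\<in>A. Im z < 0}"
  have "U \<noteq> {}"
  proof -
    obtain z where z: "z \<in> A" "z \<in> cone 0 \<alpha> (pi/2)" using ng by blast
    obtain t \<rho> where e: "z = 0 + of_real t * cis \<rho>" "t \<ge> 0" "pi/2 - \<alpha>/2 \<le> \<rho>" "\<rho> \<le> pi/2 + \<alpha>/2"
      using cone_elim[OF z(2)] by blast
    have "sin \<rho> > 0" by (rule sin_gt_zero) (use e al in auto)
    then have "Im z > 0" using polar[OF z(1) e(1,2)] by simp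
    then show ?thesis using z U_def by auto
  qed
  have "L \<noteq> {}"
  proof -
    obtain z where z: "z \<in> A" "z \<in> cone 0 \<alpha> (-pi/2)" using ng by blast
    obtain t \<rho> where e: "z = 0 + of_real t * cis \<rho>" "t \<ge> 0" "-pi/2 - \<alpha>/2 \<le> \<rho>" "\<rho> \<le> -pi/2 + \<alpha>/2"
      using cone_elim[OF z(2)] by blast
    have "sin (-\<rho>) > 0" by (rule sin_gt_zero) (use e al in auto)
    then have "Im z < 0" using polar[OF z(1) e(1,2)] by (simp add: mult_pos_neg)
    then show ?thesis using z L_def by auto
  qed
  have finU: "finite (Arg ` U)" and finL: "finite (Arg ` L)" using fin U_def L_def by auto
  define \<phi>1 where "\<phi>1 = Min (Arg ` U)"
  define \<phi>2 where "\<phi>2 = Max (Arg ` L)"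
  obtain z1 where z1: "z1 \<in> U" "Arg z1 = \<phi>1"
    using Min_in[OF finU] \<open>U \<noteq> {}\<close> unfolding \<phi>1_def by fastforce
  obtain z2 where z2: "z2 \<in> L" "Arg z2 = \<phi>2"
    using Max_in[OF finL] \<open>L \<noteq> {}\<close> unfolding \<phi>2_def by fastforce
  have minU: "\<phi>1 \<le> Arg z" if "z \<in> U" for z using Min_le[OF finU] that unfolding \<phi>1_def by blast
  have maxL: "Arg z \<le> \<phi>2" if "z \<in> L" for z using Max_ge[OF finL] that unfolding \<phi>2_def by blast
  have "\<phi>1 - \<phi>2 \<le> \<alpha>"
  proof (rule ccontr)
    assume gap: "\<not> \<phi>1 - \<phi>2 \<le> \<alpha>"
    have p1: "\<phi>1 < pi" using z1 Arg_lt_pi[of z1] U_def by auto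
    have p2: "- pi < \<phi>2" "\<phi>2 < 0" using z2 mpi_less_Arg[of z2] Arg_neg_iff[of z2] L_def by auto
    obtain z where z: "z \<in> A" "z \<in> cone 0 \<alpha> ((\<phi>1 + \<phi>2)/2)" using ng by blast
    obtain t \<rho> where e: "z = 0 + of_real t * cis \<rho>" "t \<ge> 0" "(\<phi>1 + \<phi>2)/2 - \<alpha>/2 \<le> \<rho>" "\<rho> \<le> (\<phi>1 + \<phi>2)/2 + \<alpha>/2"
      using cone_elim[OF z(2)] by blast
    have r: "\<phi>2 < \<rho>" "\<rho> < \<phi>1" using e(3,4) gap by (auto simp: field_simps)
    have tp: "t > 0" and imz: "Im z = t * sin \<rho>" using polar[OF z(1) e(1,2)] by auto
    have "sgn z = cis \<rho>" using e(1) tp by (simp add: sgn_mult sgn_of_real)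
    then have argz: "Arg z = \<rho>" by (rule cis_Arg_unique) (use r p1 p2 in auto)
    consider "\<rho> > 0" | "\<rho> < 0" | "\<rho> = 0" by linarith
    then show False
    proof cases
      case 1
      have "sin \<rho> > 0" by (rule sin_gt_zero) (use 1 r p1 in auto)
      then have "z \<in> U" using U_def z(1) imz tp by simp
      then show False using minU argz r by force
    next
      case 2
      have "sin (-\<rho>) > 0" by (rule sin_gt_zero) (use 2 r p2 in auto)
      then have "z \<in> L" using L_def z(1) imz tp by (simp add: mult_pos_neg)
      then show False using maxL argz r by force
    next
      case 3
      then have "z = of_real t" using e(1) by simp
      moreover have "t < c" using nodes[OF z(1)] \<open>z = of_real t\<close> tp by simp
      ultimately have "norm (z - of_real c) < c" using tp by (simp add: norm_of_real flip: of_real_diff)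
      then show False using nodes[OF z(1)] by simp
    qed
  qed
  then show ?thesis using z1 z2 U_def L_def by auto
qed

lemma core:
  fixes u v :: complex and A B :: "complex set" and \<alpha> :: real
  assumes uv: "u \<noteq> v" and fA: "finite A" and fB: "finite B"
    and al: "0 < \<alpha>" "\<alpha> \<le> 5*pi/6"
    and gA: "\<not> has_gap u \<alpha> A" and gB: "\<not> has_gap v \<alpha> B"
    and nA: "\<And>p. p \<in> A \<Longrightarrow> p \<noteq> u \<and> dist u p < dist u v \<and> dist p v \<ge> dist u v"
    and nB: "\<And>q. q \<in> B \<Longrightarrow> q \<noteq> v \<and> dist v q < dist u v \<and> dist u q \<ge> dist u v"
  shows "\<exists>p\<in>A. \<exists>q\<in>B. dist p q < dist u v"
proof -
  define c where "c = dist u v"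
  have c: "0 < c" using uv c_def by simp
  define w where "w = (v - u) / of_real c"
  have w1: "norm w = 1" using c uv unfolding w_def c_def by (simp add: dist_norm norm_divide norm_minus_commute)
  have cw: "of_real c * w = v - u" using c unfolding w_def by simp
  define w' where "w' = - w"
  have w1': "norm w' = 1" using w1 w'_def by simp
  have w0: "w \<noteq> 0" "w' \<noteq> 0" using w1 w1' by auto
  have veq: "v = u + of_real c * w" using cw by simp
  have inv1: "x = u + w * ((x - u) / w)" for x using w0 by simp
  have inv2: "x = v + w' * ((x - v) / w')" for x using w0 by simp
  define A' where "A' = (\<lambda>x. (x - u) / w) ` A"
  define B' where "B' = (\<lambda>x. (x - v) / w') ` B"
  have pi56: "\<alpha> < pi" using al pi_gt_zero by linarith
  have sA: "\<exists>z1\<in>A'. \<exists>z2\<in>A'. Im z1 > 0 \<and> Im z2 < 0 \<and> Arg z1 - Arg z2 \<le> \<alpha>"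
  proof (rule side[OF _ c al(1) pi56])
    show "finite A'" using fA A'_def by simp
    show "\<exists>z\<in>A'. z \<in> cone 0 \<alpha> \<theta>" for \<theta>
    proof -
      obtain x where x: "x \<in> A" "x \<in> cone u \<alpha> (\<theta> + Arg w)"
        using gA unfolding has_gap_def by blast
      have "(x - u) / w \<in> cone 0 \<alpha> (\<theta> + Arg w - Arg w)" by (rule cone_transform[OF w1 x(2)])
      then show ?thesis using x(1) A'_def by auto
    qed
    show "z \<noteq> 0 \<and> norm z < c \<and> norm (z - of_real c) \<ge> c" if zz: "z \<in> A'" for z
    proof -
      obtain x where x: "x \<in> A" "z = (x - u) / w" using zz A'_def by auto
      have nz: "norm z = dist x u" using x w1 by (simp add: norm_divide dist_norm)
      have "z - of_real c = (x - v) / w"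
      proof -
        have "x - v = w * (z - of_real c)" using x(2) inv1[of x] veq by (simp add: algebra_simps)
        then show ?thesis using w0 by (simp add: field_simps)
      qed
      then have "norm (z - of_real c) = dist x v" using w1 by (simp add: norm_divide dist_norm)
      then show ?thesis using nz nA[OF x(1)] c_def x w0 by (auto simp: dist_commute)
    qed
  qed
  have sB: "\<exists>z1\<in>B'. \<exists>z2\<in>B'. Im z1 > 0 \<and> Im z2 < 0 \<and> Arg z1 - Arg z2 \<le> \<alpha>"
  proof (rule side[OF _ c al(1) pi56])
    show "finite B'" using fB B'_def by simp
    show "\<exists>z\<in>B'. z \<in> cone 0 \<alpha> \<theta>" for \<theta>
    proof -
      obtain x where x: "x \<in> B" "x \<in> cone v \<alpha> (\<theta> + Arg w')"
        using gB unfolding has_gap_def by blast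
      have "(x - v) / w' \<in> cone 0 \<alpha> (\<theta> + Arg w' - Arg w')" by (rule cone_transform[OF w1' x(2)])
      then show ?thesis using x(1) B'_def by auto
    qed
    show "z \<noteq> 0 \<and> norm z < c \<and> norm (z - of_real c) \<ge> c" if zz: "z \<in> B'" for z
    proof -
      obtain x where x: "x \<in> B" "z = (x - v) / w'" using zz B'_def by auto
      have nz: "norm z = dist x v" using x w1' by (simp add: norm_divide dist_norm)
      have "z - of_real c = (x - u) / w'"
      proof -
        have "x - u = w' * (z - of_real c)" using x(2) inv2[of x] veq unfolding w'_def by (simp add: algebra_simps)
        then show ?thesis using w0 by (simp add: field_simps)
      qed
      then have "norm (z - of_real c) = dist x u" using w1' by (simp add: norm_divide dist_norm)
      then show ?thesis using nz nB[OF x(1)] c_def x w0 by (auto simp: dist_commute)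
    qed
  qed
  obtain a1 a2 where a: "a1 \<in> A'" "a2 \<in> A'" "Im a1 > 0" "Im a2 < 0" "Arg a1 - Arg a2 \<le> \<alpha>" using sA by blast
  obtain b1 b2 where b: "b1 \<in> B'" "b2 \<in> B'" "Im b1 > 0" "Im b2 < 0" "Arg b1 - Arg b2 \<le> \<alpha>" using sB by blast
  have propA: "z \<noteq> 0 \<and> norm z < c \<and> norm (z - of_real c) \<ge> c" if zz: "z \<in> A'" for z
  proof -
    obtain x where x: "x \<in> A" "z = (x - u) / w" using zz A'_def by auto
    have nz: "norm z = dist x u" using x w1 by (simp add: norm_divide dist_norm)
    have "z - of_real c = (x - v) / w"
      proof -
        have "x - v = w * (z - of_real c)" using x(2) inv1[of x] veq by (simp add: algebra_simps)
        then show ?thesis using w0 by (simp add: field_simps)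
      qed
    then have "norm (z - of_real c) = dist x v" using w1 by (simp add: norm_divide dist_norm)
    then show ?thesis using nz nA[OF x(1)] c_def x w0 by (auto simp: dist_commute)
  qed
  have propB: "z \<noteq> 0 \<and> norm z < c \<and> norm (z - of_real c) \<ge> c" if zz: "z \<in> B'" for z
  proof -
    obtain x where x: "x \<in> B" "z = (x - v) / w'" using zz B'_def by auto
    have nz: "norm z = dist x v" using x w1' by (simp add: norm_divide dist_norm)
    have "z - of_real c = (x - u) / w'"
      proof -
        have "x - u = w' * (z - of_real c)" using x(2) inv2[of x] veq unfolding w'_def by (simp add: algebra_simps)
        then show ?thesis using w0 by (simp add: field_simps)
      qed
    then have "norm (z - of_real c) = dist x u" using w1' by (simp add: norm_divide dist_norm)
    then show ?thesis using nz nB[OF x(1)] c_def x w0 by (auto simp: dist_commute)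
  qed
  have link: "dist p q = norm (za + zb - of_real c)" if "p \<in> A" "q \<in> B" "za = (p - u) / w" "zb = (q - v) / w'" for p q za zb
  proof -
    have e1: "p - u = w*za" using that(3) w0 by simp
    have e2: "q - v = - (w*zb)" using that(4) w0 unfolding w'_def by simp
    have "p - q = (p-u) - (q-v) - (v - u)" by simp
    also have "... = w*za + w*zb - of_real c * w" using e1 e2 cw by simp
    also have "... = w * (za + zb - of_real c)" by (simp add: algebra_simps)
    finally have "p - q = w * (za + zb - of_real c)" .
    then show ?thesis using w1 by (simp add: dist_norm norm_mult)
  qed
  have "(Arg a1 - Arg b2) + (Arg b1 - Arg a2) \<le> 2 * (5*pi/6)" using a b al by linarith
  then consider "Arg a1 - Arg b2 \<le> 5*pi/6" | "Arg b1 - Arg a2 \<le> 5*pi/6" by linarith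
  then show ?thesis
  proof cases
    case 1
    have "norm (a1 + b2 - of_real c) < c"
      using pair_cplx[OF c _ _ _ _ _ _ a(3) b(4) 1] propA[OF a(1)] propB[OF b(2)] by blast
    moreover obtain p where "p \<in> A" "a1 = (p - u) / w" using a(1) A'_def by auto
    moreover obtain q where "q \<in> B" "b2 = (q - v) / w'" using b(2) B'_def by auto
    ultimately show ?thesis using link c_def by metis
  next
    case 2
    have "norm (a2 + b1 - of_real c) < c"
      using pair_cplx2[OF c _ _ _ _ _ _ a(4) b(3) 2] propA[OF a(2)] propB[OF b(1)] by blast
    moreover obtain p where "p \<in> A" "a2 = (p - u) / w" using a(2) A'_def by auto
    moreover obtain q where "q \<in> B" "b1 = (q - v) / w'" using b(1) B'_def by auto
    ultimately show ?thesis using link c_def by metis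
  qed
qed

lemma idx:
  assumes "x \<in> V" "x \<noteq> u" "dist u x \<le> r k" "x \<notin> N_alpha V r k \<alpha> u"
  shows "\<not> has_gap u \<alpha> (N_alpha V r k \<alpha> u) \<and> N_alpha V r k \<alpha> u \<subseteq> V
     \<and> (\<forall>y\<in>N_alpha V r k \<alpha> u. y \<noteq> u \<and> dist u y < dist u x)"
proof (cases "\<exists>i\<in>{1..k}. \<not> has_gap u \<alpha> (S_lvl V r i u)")
  case True
  define i where "i = (LEAST i. i \<in> {1..k} \<and> \<not> has_gap u \<alpha> (S_lvl V r i u))"
  have iP: "i \<in> {1..k} \<and> \<not> has_gap u \<alpha> (S_lvl V r i u)"
    unfolding i_def by (rule LeastI_ex) (use True in blast)
  have N: "N_alpha V r k \<alpha> u = S_lvl V r i u"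
    unfolding N_alpha_def cbtc_index_def i_def using True by simp
  have "dist u x > r i" using assms N by (auto simp: S_lvl_def)
  then show ?thesis using iP N by (auto simp: S_lvl_def)
next
  case False
  then have "N_alpha V r k \<alpha> u = S_lvl V r k u" unfolding N_alpha_def cbtc_index_def by simp
  then show ?thesis using assms by (auto simp: S_lvl_def)
qed

theorem lemma1:
  fixes V :: "complex set" and r :: "nat \<Rightarrow> real" and k :: nat and R \<alpha> :: real
    and u v :: complex
  assumes "finite V"
    and "k \<ge> 1" and "0 < r 1" and "\<And>i j. 1 \<le> i \<Longrightarrow> i < j \<Longrightarrow> j \<le> k \<Longrightarrow> r i < r j"
    and "r k = R"
    and "0 < \<alpha>" and "\<alpha> \<le> 5 * pi / 6"
    and "u \<in> V" and "v \<in> V" and "u \<noteq> v" and "dist u v \<le> R"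
  shows "E_alpha V r k \<alpha> u v \<or>
         (\<exists>u'\<in>V. \<exists>v'\<in>V. dist u' v' < dist u v
             \<and> (u' = u \<or> E_alpha V r k \<alpha> u u')
             \<and> (v' = v \<or> E_alpha V r k \<alpha> v v'))"
proof (rule ccontr)
  assume H: "\<not> ?thesis"
  then have nv: "v \<notin> N_alpha V r k \<alpha> u" and nu: "u \<notin> N_alpha V r k \<alpha> v"
    unfolding E_alpha_def by auto
  have iu: "\<not> has_gap u \<alpha> (N_alpha V r k \<alpha> u) \<and> N_alpha V r k \<alpha> u \<subseteq> V
     \<and> (\<forall>y\<in>N_alpha V r k \<alpha> u. y \<noteq> u \<and> dist u y < dist u v)"
    by (rule idx) (use assms nv in auto)
  have iv: "\<not> has_gap v \<alpha> (N_alpha V r k \<alpha> v) \<and> N_alpha V r k \<alpha> v \<subseteq> V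
     \<and> (\<forall>y\<in>N_alpha V r k \<alpha> v. y \<noteq> v \<and> dist v y < dist v u)"
    by (rule idx) (use assms nu in \<open>auto simp: dist_commute\<close>)
  have "\<exists>p\<in>N_alpha V r k \<alpha> u. \<exists>q\<in>N_alpha V r k \<alpha> v. dist p q < dist u v"
  proof (rule core)
    show "u \<noteq> v" "0 < \<alpha>" "\<alpha> \<le> 5*pi/6" using assms by auto
    show "finite (N_alpha V r k \<alpha> u)" "finite (N_alpha V r k \<alpha> v)"
      using iu iv assms(1) finite_subset by blast+
    show "\<not> has_gap u \<alpha> (N_alpha V r k \<alpha> u)" "\<not> has_gap v \<alpha> (N_alpha V r k \<alpha> v)" using iu iv by auto
    show "p \<noteq> u \<and> dist u p < dist u v \<and> dist p v \<ge> dist u v" if "p \<in> N_alpha V r k \<alpha> u" for p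
    proof -
      have "p \<in> V" "E_alpha V r k \<alpha> u p" using iu that unfolding E_alpha_def by auto
      then have "\<not> dist p v < dist u v" using H assms(9) by blast
      then show ?thesis using iu that by auto
    qed
    show "q \<noteq> v \<and> dist v q < dist u v \<and> dist u q \<ge> dist u v" if "q \<in> N_alpha V r k \<alpha> v" for q
    proof -
      have "q \<in> V" "E_alpha V r k \<alpha> v q" using iv that unfolding E_alpha_def by auto
      then have "\<not> dist u q < dist u v" using H assms(8) by blast
      then show ?thesis using iv that by (auto simp: dist_commute)
    qed
  qed
  then obtain p q where "p \<in> N_alpha V r k \<alpha> u" "q \<in> N_alpha V r k \<alpha> v" "dist p q < dist u v" by blast
  moreover have "p \<in> V" "q \<in> V" using calculation iu iv by auto
  moreover have "E_alpha V r k \<alpha> u p" "E_alpha V r k \<alpha> v q" using calculation unfolding E_alpha_def by auto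
  ultimately show False using H by blast
qed

end
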